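(* Let $(N,v)$ be a transferable utility game with $N=\{1,\dots,n\}$ and $\Pi(v)\neq\emptyset$, and let $\delta>0$ be such that every value $v(S)$, $S\subseteq N$, is an integer multiple of $\delta$ and there exists $(\mathbf{x},\rho)\in\Pi(v)$ with every $x_i$ an integer multiple of $\delta$. Run the Coalition Proposal algorithm (described in the context) on $(N,v)$ with step $\delta$ for infinitely many iterations. Then, with probability $1$, the environment state $(\mathbf{a},\mathcal{C})$ converges to (i.e., eventually becomes and remains equal to) some state $(\mathbf{x},\rho)\in\Pi(v)$.
   Context: A transferable utility (TU) game is a pair $(N,v)$ with $N=\{1,\dots,n\}$ and $v:2^N\to\mathbb{R}$, $v(\emptyset)=0$. An allocation is $\mathbf{x}\in\mathbb{R}^n$. $\mathcal{P}(N)$ denotes the set of partitions of $N$. A core solution is a pair $(\mathbf{x},\rho)$ with $\mathbf{x}\in\mathbb{R}^n$, $\rho\in\mathcal{P}(N)$, such that $\sum_{i\in S}x_i\ge v(S)$ for all $S\subseteq N$ and $\sum_{i\in S}x_i=v(S)$ for all $S\in\rho$; $\Pi(v)$ is the set of core solutions. Coalition Proposal algorithm with step $\delta$: each player $i$ holds an aspiration $a_i$ and a coalition state $C_i\subseteq N$. Initially $a_i$ is an arbitrary integer multiple of $\delta$ and $C_i=\emptyset$. In each iteration: a player $i\in N$ is activated at random; $i$ chooses at random a set $S\subseteq N\setminus\{i\}$ and proposes $J=S\cup\{i\}$ (the random choices are made independently across iterations, every player and every subset having positive probability). If $\sum_{j\in J}a_j+\delta\le v(J)$ (success): $a_i\leftarrow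 a_i+\delta$; then for every $j\in J$ and every $k\in C_j$ with $k\neq j$, set $C_k\leftarrow\emptyset$; then set $C_j\leftarrow J$ for all $j\in J$. Otherwise (failure): if $C_i=\emptyset$, set $a_i\leftarrow\max(v(\{i\}),a_i-\delta)$. Finally, if $a_i=v(\{i\})$ and $C_i=\emptyset$, set $C_i\leftarrow\{i\}$. The environment state at an iteration is $(\mathbf{a},\mathcal{C})$, where $\mathbf{a}=(a_1,\dots,a_n)$ and $\mathcal{C}=\{C_i:i\in N\}$ is the set of (nonempty) formed coalitions. *)

theory Defs
  imports "HOL-Probability.Probability" "HOL-Library.Disjoint_Sets"
begin

text \<open>Players are N = {1..n}. A game is v :: nat set => real (values outside
subsets of N are irrelevant). Allocations x :: nat => real (only x i, i in N, matter).\<close>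

definition players :: "nat \<Rightarrow> nat set" where
  "players n = {1..n}"

definition is_mult :: "real \<Rightarrow> real \<Rightarrow> bool" where
  "is_mult \<delta> r \<longleftrightarrow> (\<exists>k::int. r = of_int k * \<delta>)"

definition core_solution :: "nat \<Rightarrow> (nat set \<Rightarrow> real) \<Rightarrow> (nat \<Rightarrow> real) \<Rightarrow> nat set set \<Rightarrow> bool" where
  "core_solution n v x \<rho> \<longleftrightarrow>
     partition_on (players n) \<rho> \<and>
     (\<forall>S. S \<subseteq> players n \<longrightarrow> (\<Sum>i\<in>S. x i) \<ge> v S) \<and>
     (\<forall>S\<in>\<rho>. (\<Sum>i\<in>S. x i) = v S)"

text \<open>Algorithm state: aspirations a and coalition states C.\<close>
type_synonym cp_state = "(nat \<Rightarrow> real) \<times> (nat \<Rightarrow> nat set)"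

text \<open>On success, the clearing step
 "for every j in J and every k in C_j with k \<noteq> j, set C_k := {}" is read
 using the coalition states before the iteration, followed by C_j := J for j in J.\<close>
definition cp_step :: "(nat set \<Rightarrow> real) \<Rightarrow> real \<Rightarrow> cp_state \<Rightarrow> nat \<times> nat set \<Rightarrow> cp_state" where
  "cp_step v \<delta> st choice =
     (let (a, C) = st; (i, S) = choice; J = S \<union> {i};
          (a', C') =
            (if (\<Sum>j\<in>J. a j) + \<delta> \<le> v J then
               (a(i := a i + \<delta>),
                (\<lambda>k. if k \<in> J then J
                     else if (\<exists>j\<in>J. k \<in> C j \<and> k \<noteq> j) then {}
                     else C k))
             else
               (if C i = {} then a(i := max (v {i}) (a i - \<delta>)) else a, C))
      in (a', if a' i = v {i} \<and> C' i = {} then C'(i := {i}) else C'))"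

fun cp_run :: "(nat set \<Rightarrow> real) \<Rightarrow> real \<Rightarrow> (nat \<Rightarrow> real) \<Rightarrow> (nat \<times> nat set) stream \<Rightarrow> nat \<Rightarrow> cp_state" where
  "cp_run v \<delta> a0 \<omega> 0 = (a0, \<lambda>_. {})"
| "cp_run v \<delta> a0 \<omega> (Suc t) = cp_step v \<delta> (cp_run v \<delta> a0 \<omega> t) (\<omega> !! t)"

definition env_state_eq :: "nat \<Rightarrow> cp_state \<Rightarrow> (nat \<Rightarrow> real) \<Rightarrow> nat set set \<Rightarrow> bool" where
  "env_state_eq n st x \<rho> \<longleftrightarrow>
     (\<forall>i\<in>players n. fst st i = x i) \<and>
     {snd st i | i. i \<in> players n \<and> snd st i \<noteq> {}} = \<rho>"

end

theory Submission imports Defs begin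

definition newC :: "(nat \<Rightarrow> nat set) \<Rightarrow> nat set \<Rightarrow> nat \<Rightarrow> nat set" where
  "newC C J = (\<lambda>k. if k \<in> J then J else if (\<exists>j\<in>J. k \<in> C j \<and> k \<noteq> j) then {} else C k)"

lemma step_succ:
  assumes "(\<Sum>j\<in>insert i S. a j) + \<delta> \<le> v (insert i S)"
  shows "cp_step v \<delta> (a, C) (i, S) = (a(i := a i + \<delta>), newC C (insert i S))"
  using assms by (simp add: cp_step_def Let_def newC_def)

lemma step_fail:
  assumes "\<not> (\<Sum>j\<in>insert i S. a j) + \<delta> \<le> v (insert i S)"
  shows "cp_step v \<delta> (a, C) (i, S) =
    (let a' = (if C i = {} then a(i := max (v {i}) (a i - \<delta>)) else a) in
     (a', if a' i = v {i} \<and> C i = {} then C(i := {i}) else C))"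
  using assms by (simp add: cp_step_def Let_def)

lemma is_mult_add: "is_mult d x \<Longrightarrow> is_mult d y \<Longrightarrow> is_mult d (x + y)"
  unfolding is_mult_def by (metis distrib_right of_int_add)
lemma is_mult_diff: "is_mult d x \<Longrightarrow> is_mult d y \<Longrightarrow> is_mult d (x - y)"
  unfolding is_mult_def by (metis left_diff_distrib of_int_diff)
lemma is_mult_self: "is_mult d d"
  unfolding is_mult_def by (rule exI[of _ 1]) simp
lemma is_mult_0: "is_mult d 0"
  unfolding is_mult_def by (rule exI[of _ 0]) simp
lemma is_mult_max: "is_mult d x \<Longrightarrow> is_mult d y \<Longrightarrow> is_mult d (max x y)"
  by (simp add: max_def)
lemma is_mult_sum: "finite T \<Longrightarrow> (\<forall>i\<in>T. is_mult d (f i)) \<Longrightarrow> is_mult d (\<Sum>i\<in>T. f i)"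
  by (induction T rule: finite_induct) (auto simp: is_mult_0 is_mult_add)
lemma is_mult_lt:
  assumes "d > 0" "is_mult d x" "is_mult d y" "x < y" shows "x + d \<le> y"
proof -
  obtain k l :: int where k: "x = of_int k * d" and l: "y = of_int l * d"
    using assms unfolding is_mult_def by blast
  have "k < l" using assms(1,4) k l by (metis mult_less_cancel_right_pos of_int_less_iff)
  hence "of_int k + 1 \<le> (of_int l :: real)" by linarith
  hence "(of_int k + 1) * d \<le> of_int l * d" using assms(1) by (simp add: mult_right_mono)
  thus ?thesis using k l by (simp add: algebra_simps)
qed


definition coal_ok :: "nat set \<Rightarrow> (nat \<Rightarrow> nat set) \<Rightarrow> bool" where
  "coal_ok P C \<longleftrightarrow> (\<forall>i. i \<notin> P \<longrightarrow> C i = {}) \<and>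
     (\<forall>i\<in>P. C i \<noteq> {} \<longrightarrow> i \<in> C i \<and> C i \<subseteq> P \<and> (\<forall>k\<in>C i. C k = C i))"

lemma newC_aux:
  assumes ok: "coal_ok P C" and J: "J \<subseteq> P"
  shows "\<And>k. k \<notin> J \<Longrightarrow> \<not>(\<exists>j\<in>J. k \<in> C j \<and> k \<noteq> j) \<Longrightarrow> C k \<noteq> {} \<Longrightarrow> \<forall>m\<in>C k. m \<notin> J \<and> \<not>(\<exists>j\<in>J. m \<in> C j \<and> m \<noteq> j)"
proof (intro ballI conjI)
  fix k m assume k: "k \<notin> J" "\<not>(\<exists>j\<in>J. k \<in> C j \<and> k \<noteq> j)" "C k \<noteq> {}" and m: "m \<in> C k"
  have kP: "k \<in> P" using ok k(3) unfolding coal_ok_def by blast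
  have Cm: "C m = C k" using ok kP k(3) m unfolding coal_ok_def by blast
  have kCk: "k \<in> C k" using ok kP k(3) unfolding coal_ok_def by blast
  show "m \<notin> J" using k(1,2) Cm kCk by force
  show "\<not>(\<exists>j\<in>J. m \<in> C j \<and> m \<noteq> j)"
  proof
    assume "\<exists>j\<in>J. m \<in> C j \<and> m \<noteq> j"
    then obtain j where j: "j \<in> J" "m \<in> C j" by blast
    have "C j \<noteq> {}" using j by blast
    hence "C m = C j" using ok j J unfolding coal_ok_def by blast
    hence "k \<in> C j" using Cm kCk by simp
    moreover have "k \<noteq> j" using k(1) j(1) by blast
    ultimately show False using k(2) j(1) by blast
  qed
  qed

lemma newC_ok:
  assumes ok: "coal_ok P C" and J: "J \<subseteq> P" "J \<noteq> {}"
  shows "coal_ok P (newC C J)"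
    and "\<And>k. newC C J k \<noteq> J \<Longrightarrow> newC C J k \<noteq> {} \<Longrightarrow> newC C J k = C k \<and> (\<forall>m\<in>C k. m \<notin> J)"
proof -
  show "coal_ok P (newC C J)"
    unfolding coal_ok_def
  proof (rule conjI; (intro allI impI ballI)?)
    fix i assume "i \<notin> P"
    have ok1: "\<forall>i. i \<notin> P \<longrightarrow> C i = {}" and ok2: "\<forall>i\<in>P. C i \<noteq> {} \<longrightarrow> C i \<subseteq> P"
      using ok unfolding coal_ok_def by blast+
    have "i \<notin> J" using \<open>i \<notin> P\<close> J by blast
    moreover have "\<not>(\<exists>j\<in>J. i \<in> C j \<and> i \<noteq> j)"
    proof
      assume "\<exists>j\<in>J. i \<in> C j \<and> i \<noteq> j"
      then obtain j where "j \<in> J" "i \<in> C j" by blast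
      thus False using ok2 J \<open>i \<notin> P\<close> by blast
    qed
    moreover have "C i = {}" using ok1 \<open>i \<notin> P\<close> by blast
    ultimately
    show "newC C J i = {}" unfolding newC_def by simp
  next
    fix i assume i: "i \<in> P" "newC C J i \<noteq> {}"
    show "i \<in> newC C J i \<and> newC C J i \<subseteq> P \<and> (\<forall>k\<in>newC C J i. newC C J k = newC C J i)"
    proof (cases "i \<in> J")
      case True thus ?thesis using J unfolding newC_def by auto
    next
      case False
      hence nf: "\<not>(\<exists>j\<in>J. i \<in> C j \<and> i \<noteq> j)" and Ci: "newC C J i = C i" "C i \<noteq> {}"
        using i(2) unfolding newC_def by (auto split: if_splits)
      have "\<forall>m\<in>C i. m \<notin> J \<and> \<not>(\<exists>j\<in>J. m \<in> C j \<and> m \<noteq> j)" using newC_aux[OF ok J(1) False nf Ci(2)] .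
      hence "\<forall>m\<in>C i. newC C J m = C m" unfolding newC_def by auto
      moreover have "i \<in> C i" "C i \<subseteq> P" "\<forall>k\<in>C i. C k = C i"
        using ok i(1) Ci(2) unfolding coal_ok_def by blast+
      ultimately show ?thesis unfolding Ci(1) by metis
    qed
  qed
next
  fix k assume k: "newC C J k \<noteq> J" "newC C J k \<noteq> {}"
  hence kJ: "k \<notin> J" and nf: "\<not>(\<exists>j\<in>J. k \<in> C j \<and> k \<noteq> j)" and Ck: "newC C J k = C k"
    unfolding newC_def by (auto split: if_splits)
  have "C k \<noteq> {}" using k Ck by simp
  thus "newC C J k = C k \<and> (\<forall>m\<in>C k. m \<notin> J)" using newC_aux[OF ok J(1) kJ nf] Ck by blast
qed


lemma coal_ok_single:
  assumes ok: "coal_ok P C" and i: "i \<in> P" "C i = {}"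
  shows "coal_ok P (C(i := {i}))"
  unfolding coal_ok_def
proof (rule conjI; (intro allI impI ballI)?)
  fix k assume "k \<notin> P"
  hence "k \<noteq> i" "C k = {}" using ok i unfolding coal_ok_def by blast+
  thus "(C(i := {i})) k = {}" by simp
next
  fix k assume k: "k \<in> P" "(C(i := {i})) k \<noteq> {}"
  show "k \<in> (C(i := {i})) k \<and> (C(i := {i})) k \<subseteq> P \<and> (\<forall>m\<in>(C(i := {i})) k. (C(i := {i})) m = (C(i := {i})) k)"
  proof (cases "k = i")
    case True thus ?thesis using i by simp
  next
    case False
    hence Ck: "C k \<noteq> {}" using k by simp
    have A: "k \<in> C k" "C k \<subseteq> P" "\<forall>m\<in>C k. C m = C k" using ok k(1) Ck unfolding coal_ok_def by blast+
    have "i \<notin> C k" using A(3) i(2) Ck by blast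
    hence "\<forall>m\<in>C k. (C(i := {i})) m = C m" by auto
    thus ?thesis using A False by (metis fun_upd_other)
  qed
qed

lemma sum_upd: fixes a :: "nat \<Rightarrow> real" shows "finite J \<Longrightarrow> i \<in> J \<Longrightarrow> (\<Sum>j\<in>J. (a(i := y)) j) = (\<Sum>j\<in>J. a j) + (y - a i)"
proof -
  assume f: "finite J" and i: "i \<in> J"
  have "(\<Sum>j\<in>J. (a(i := y)) j) = (a(i := y)) i + (\<Sum>j\<in>J - {i}. (a(i := y)) j)" by (rule sum.remove[OF f i])
  hence "(\<Sum>j\<in>J. (a(i := y)) j) = y + (\<Sum>j\<in>J - {i}. (a(i := y)) j)" by simp
  also have "(\<Sum>j\<in>J - {i}. (a(i := y)) j) = (\<Sum>j\<in>J - {i}. a j)" by (rule sum.cong) auto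
  also have "(\<Sum>j\<in>J. a j) = a i + (\<Sum>j\<in>J - {i}. a j)" using sum.remove[OF f i] by simp
  ultimately show ?thesis by simp
qed

lemma sum_upd_out: "i \<notin> J \<Longrightarrow> (\<Sum>j\<in>J. (a(i := y)) j) = (\<Sum>j\<in>J. a j)"
  by (rule sum.cong) auto



lemma pred_pmf_any: "Measurable.pred (measure_pmf p) P"
  by (simp add: measurable_def)


lemma space_SM[simp]: "space (stream_space (measure_pmf p)) = UNIV"
  by (simp add: space_stream_space)

lemma pred_blockE:
  "Measurable.pred (stream_space (measure_pmf p)) (\<lambda>\<omega>. \<exists>t. \<forall>i<L. \<omega> !! (t + i) = w ! i)"
  by measurable

lemma pred_blockE2:
  "Measurable.pred (stream_space (count_space UNIV)) (\<lambda>\<omega>. \<not> (\<exists>t. \<forall>i<L. \<omega> !! (t + i) = w ! i))"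
  by measurable

lemma pred_to_sets:
  assumes "Measurable.pred (stream_space (count_space UNIV)) P"
  shows "{\<omega>. P \<omega>} \<in> sets (stream_space (measure_pmf p))"
proof -
  have e: "sets (stream_space (measure_pmf p)) = sets (stream_space (count_space UNIV))"
    by (rule sets_stream_space_cong) simp
  have "{x \<in> space (stream_space (count_space UNIV)). P x} \<in> sets (stream_space (count_space UNIV))"
    using assms by (simp add: pred_def)
  thus ?thesis unfolding e by (simp add: space_stream_space)
qed

lemma stream_G:
  assumes R[measurable]: "Measurable.pred (stream_space (count_space UNIV)) R"
  shows "emeasure (stream_space (measure_pmf p)) {\<omega>. (\<forall>i<length u. \<omega> !! i = u ! i) \<and> R (sdrop (length u) \<omega>)}
       = ennreal (\<Prod>i<length u. pmf p (u ! i)) * emeasure (stream_space (measure_pmf p)) {\<omega>. R \<omega>}"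
proof (induction u)
  case Nil thus ?case by simp
next
  case (Cons c u)
  let ?SM = "stream_space (measure_pmf p)"
  let ?Y = "{x. (\<forall>i<length u. x !! i = u ! i) \<and> R (sdrop (length u) x)}"
  let ?X = "{\<omega>. (\<forall>i<length (c # u). \<omega> !! i = (c # u) ! i) \<and> R (sdrop (length (c # u)) \<omega>)}"
  have Xs: "?X \<in> sets ?SM" by (rule pred_to_sets) measurable
  have sl: "\<And>t. {x \<in> space ?SM. t ## x \<in> ?X} = (if t = c then ?Y else {})"
    by (auto simp: less_Suc_eq_0_disj)
  have "emeasure ?SM ?X = (\<integral>\<^sup>+t. emeasure ?SM {x \<in> space ?SM. t ## x \<in> ?X} \<partial>measure_pmf p)"
    by (rule prob_space.emeasure_stream_space[OF prob_space_measure_pmf Xs])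
  also have "\<dots> = (\<integral>\<^sup>+t. emeasure ?SM ?Y * indicator {c} t \<partial>measure_pmf p)"
    by (intro nn_integral_cong, subst sl) (simp split: split_indicator)
  also have "\<dots> = emeasure ?SM ?Y * pmf p c"
    by (subst nn_integral_cmult_indicator) (simp_all add: emeasure_pmf_single)
  also have "\<dots> = ennreal (\<Prod>i<length u. pmf p (u ! i)) * emeasure ?SM {\<omega>. R \<omega>} * pmf p c"
    using Cons.IH by simp
  also have "\<dots> = ennreal (\<Prod>i<length (c # u). pmf p ((c # u) ! i)) * emeasure ?SM {\<omega>. R \<omega>}"
  proof -
    have "(\<Prod>i<length (c # u). pmf p ((c # u) ! i)) = pmf p c * (\<Prod>i<length u. pmf p (u ! i))"
      by (simp only: length_Cons prod.lessThan_Suc_shift nth_Cons_0 nth_Cons_Suc)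
    thus ?thesis by (simp add: ennreal_mult prod_nonneg mult_ac)
  qed
  finally show ?case .
qed

lemma stream_H:
  assumes R[measurable]: "Measurable.pred (stream_space (count_space UNIV)) R"
  shows "emeasure (stream_space (measure_pmf p)) {\<omega>. R (sdrop L \<omega>)} = emeasure (stream_space (measure_pmf p)) {\<omega>. R \<omega>}"
proof (induction L)
  case 0 thus ?case by simp
next
  case (Suc L)
  let ?SM = "stream_space (measure_pmf p)"
  have Xs: "{\<omega>. R (sdrop (Suc L) \<omega>)} \<in> sets ?SM" by (rule pred_to_sets) measurable
  have "emeasure ?SM {\<omega>. R (sdrop (Suc L) \<omega>)} = (\<integral>\<^sup>+t. emeasure ?SM {x \<in> space ?SM. t ## x \<in> {\<omega>. R (sdrop (Suc L) \<omega>)}} \<partial>measure_pmf p)"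
    by (rule prob_space.emeasure_stream_space[OF prob_space_measure_pmf Xs])
  also have "\<dots> = (\<integral>\<^sup>+t. emeasure ?SM {\<omega>. R \<omega>} \<partial>measure_pmf p)"
    using Suc.IH by simp
  also have "\<dots> = emeasure ?SM {\<omega>. R \<omega>}" by (simp add: measure_pmf.emeasure_space_1)
  finally show ?case .
qed


lemma block_AE:
  assumes w: "set w \<subseteq> set_pmf p"
  shows "AE \<omega> in stream_space (measure_pmf p). \<exists>t. \<forall>i<length w. \<omega> !! (t + i) = w ! i"
proof -
  let ?SM = "stream_space (measure_pmf p)"
  interpret S: prob_space ?SM by (rule prob_space.prob_space_stream_space[OF prob_space_measure_pmf])
  define L where "L = length w"
  define E where "E \<omega> \<longleftrightarrow> (\<exists>t. \<forall>i<L. \<omega> !! (t + i) = w ! i)" for \<omega>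
  have Rm: "Measurable.pred (stream_space (count_space UNIV)) (\<lambda>\<omega>. \<not> E \<omega>)" unfolding E_def by measurable
  have Rm2: "Measurable.pred (stream_space (count_space UNIV)) (\<lambda>\<omega>. \<not> E (sdrop L \<omega>))"
    using Rm by measurable
  have Rm3: "Measurable.pred (stream_space (count_space UNIV)) (\<lambda>\<omega>. (\<forall>i<L. \<omega> !! i = w ! i) \<and> \<not> E (sdrop L \<omega>))"
    using Rm by measurable
  have Rm4: "Measurable.pred (stream_space (count_space UNIV)) (\<lambda>\<omega>. \<not> (\<forall>i<L. \<omega> !! i = w ! i) \<and> \<not> E (sdrop L \<omega>))"
    using Rm by measurable
  define q where "q = (\<Prod>i<L. pmf p (w ! i))"
  have qpos: "q > 0" unfolding q_def
  proof (rule prod_pos)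
    fix i assume "i \<in> {..<L}"
    hence "w ! i \<in> set_pmf p" using w unfolding L_def by auto
    thus "0 < pmf p (w ! i)" by (simp add: pmf_positive)
  qed
  define N where "N = {\<omega>. \<not> E \<omega>}"
  define A where "A = {\<omega>. \<not> E (sdrop L \<omega>)}"
  define B where "B = {\<omega>. (\<forall>i<L. \<omega> !! i = w ! i) \<and> \<not> E (sdrop L \<omega>)}"
  have Ns: "N \<in> sets ?SM" unfolding N_def by (rule pred_to_sets[OF Rm])
  have As: "A \<in> sets ?SM" unfolding A_def by (rule pred_to_sets[OF Rm2])
  have Bs: "B \<in> sets ?SM" unfolding B_def by (rule pred_to_sets[OF Rm3])
  have BA: "B \<subseteq> A" unfolding A_def B_def by blast
  have sub: "N \<subseteq> A - B"
  proof
    fix \<omega> assume "\<omega> \<in> N"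
    hence nE: "\<not> E \<omega>" unfolding N_def by simp
    have "\<not> (\<forall>i<L. \<omega> !! i = w ! i)" using nE unfolding E_def by (metis add_0)
    moreover have "\<not> E (sdrop L \<omega>)"
    proof
      assume "E (sdrop L \<omega>)"
      then obtain t where t: "\<forall>i<L. sdrop L \<omega> !! (t + i) = w ! i" unfolding E_def by blast
      hence "\<forall>i<L. \<omega> !! ((L + t) + i) = w ! i" by (simp add: sdrop_snth add.assoc)
      thus False using nE unfolding E_def by blast
    qed
    ultimately show "\<omega> \<in> A - B" unfolding A_def B_def by simp
  qed
  have eA: "emeasure ?SM A = emeasure ?SM N"
    unfolding A_def N_def by (rule stream_H[OF Rm])
  have eB: "emeasure ?SM B = ennreal q * emeasure ?SM N"
    using stream_G[OF Rm, of p w] unfolding B_def N_def q_def L_def by simp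
  have mA: "S.prob A = S.prob N" using eA by (simp add: S.emeasure_eq_measure)
  have "ennreal (S.prob B) = ennreal (q * S.prob N)" using eB qpos
    by (simp add: S.emeasure_eq_measure ennreal_mult)
  hence mB: "S.prob B = q * S.prob N" using qpos by (simp add: ennreal_inj)
  have "S.prob N \<le> S.prob (A - B)" using sub As Bs by (intro S.finite_measure_mono) auto
  also have "\<dots> = S.prob A - S.prob B" using S.finite_measure_Diff[OF As Bs BA] .
  finally have "q * S.prob N \<le> 0" using mA mB by simp
  hence "S.prob N \<le> 0" using qpos by (simp add: mult_le_0_iff)
  hence "S.prob N = 0" using measure_nonneg[of ?SM N] by linarith
  hence "N \<in> null_sets ?SM" using Ns by (simp add: S.emeasure_eq_measure null_sets_def)
  moreover have "{x \<in> space ?SM. \<not> (\<exists>t. \<forall>i<length w. x !! (t + i) = w ! i)} \<subseteq> N"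
    unfolding N_def E_def L_def by simp
  ultimately show ?thesis by (rule AE_I')
qed


locale cpl =
  fixes n :: nat and v :: "nat set \<Rightarrow> real" and \<delta> :: real
    and p :: "(nat \<times> nat set) pmf" and a0 :: "nat \<Rightarrow> real"
  assumes v_empty: "v {} = 0"
    and delta_pos: "\<delta> > 0"
    and v_mult: "\<forall>S. S \<subseteq> players n \<longrightarrow> is_mult \<delta> (v S)"
    and p_support: "set_pmf p = {(i, S). i \<in> players n \<and> S \<subseteq> players n - {i}}"
    and a0_mult: "\<forall>i\<in>players n. is_mult \<delta> (a0 i)"
    and core_mult: "\<exists>x \<rho>. core_solution n v x \<rho> \<and> (\<forall>i\<in>players n. is_mult \<delta> (x i))"
begin

abbreviation "PN \<equiv> players n"

lemma finPN: "finite PN" by (simp add: players_def)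

definition lo :: "nat \<Rightarrow> real" where "lo i = min (a0 i) (v {i})"
definition KK :: real where "KK = (\<Sum>J\<in>Pow PN. \<bar>v J\<bar>) + (\<Sum>j\<in>PN. \<bar>lo j\<bar>)"

lemma KK_nonneg: "KK \<ge> 0" unfolding KK_def by (simp add: sum_nonneg)

lemma v_le_KK: "J \<subseteq> PN \<Longrightarrow> v J \<le> KK"
proof -
  assume J: "J \<subseteq> PN"
  have "v J \<le> \<bar>v J\<bar>" by simp
  also have "\<dots> \<le> (\<Sum>J\<in>Pow PN. \<bar>v J\<bar>)" using J finPN by (intro member_le_sum) auto
  also have "\<dots> \<le> KK" unfolding KK_def by (simp add: sum_nonneg)
  finally show ?thesis .
qed

definition Inv :: "cp_state \<Rightarrow> bool" where
  "Inv s \<longleftrightarrow> (\<forall>i. i \<notin> PN \<longrightarrow> fst s i = a0 i) \<and> coal_ok PN (snd s) \<and>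
     (\<forall>i\<in>PN. is_mult \<delta> (fst s i) \<and> lo i \<le> fst s i \<and> fst s i \<le> \<bar>a0 i\<bar> + KK) \<and>
     (\<forall>i\<in>PN. snd s i \<noteq> {} \<longrightarrow> (\<Sum>j\<in>snd s i. fst s j) \<le> v (snd s i))"

lemma supp_iff: "(i, S) \<in> set_pmf p \<longleftrightarrow> i \<in> PN \<and> S \<subseteq> PN - {i}"
  using p_support by auto

lemma inv_step:
  assumes inv: "Inv (a, C)" and i: "i \<in> PN" and S: "S \<subseteq> PN - {i}"
  shows "Inv (cp_step v \<delta> (a, C) (i, S))"
proof -
  have ok: "coal_ok PN C" and out: "\<forall>i. i \<notin> PN \<longrightarrow> a i = a0 i"
    and bnd: "\<forall>i\<in>PN. is_mult \<delta> (a i) \<and> lo i \<le> a i \<and> a i \<le> \<bar>a0 i\<bar> + KK"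
    and sm: "\<forall>i\<in>PN. C i \<noteq> {} \<longrightarrow> (\<Sum>j\<in>C i. a j) \<le> v (C i)"
    using conjunct1[OF inv[unfolded Inv_def fst_conv snd_conv]]
      conjunct1[OF conjunct2[OF inv[unfolded Inv_def fst_conv snd_conv]]]
      conjunct1[OF conjunct2[OF conjunct2[OF inv[unfolded Inv_def fst_conv snd_conv]]]]
      conjunct2[OF conjunct2[OF conjunct2[OF inv[unfolded Inv_def fst_conv snd_conv]]]]
    by - assumption+
  define J where "J = insert i S"
  have JP: "J \<subseteq> PN" and Jne: "J \<noteq> {}" and iJ: "i \<in> J" using i S unfolding J_def by blast+
  have finJ: "finite J" using JP finPN finite_subset by blast
  show ?thesis
  proof (cases "(\<Sum>j\<in>J. a j) + \<delta> \<le> v J")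
    case True
    have st: "cp_step v \<delta> (a, C) (i, S) = (a(i := a i + \<delta>), newC C J)"
      unfolding J_def by (rule step_succ) (use True in \<open>simp add: J_def\<close>)
    have ok': "coal_ok PN (newC C J)" using newC_ok(1)[OF ok JP Jne] .
    have up: "a i + \<delta> \<le> KK"
    proof -
      have e: "(\<Sum>j\<in>J. a j) = a i + (\<Sum>j\<in>J - {i}. a j)" using sum.remove[OF finJ iJ] .
      have "(\<Sum>j\<in>J - {i}. - \<bar>lo j\<bar>) \<le> (\<Sum>j\<in>J - {i}. a j)"
        using bnd JP by (intro sum_mono) force
      moreover have "(\<Sum>j\<in>J - {i}. \<bar>lo j\<bar>) \<le> (\<Sum>j\<in>PN. \<bar>lo j\<bar>)"
        using JP finPN by (intro sum_mono2) auto
      moreover have "v J \<le> \<bar>v J\<bar>" by simp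
      moreover have "\<bar>v J\<bar> \<le> (\<Sum>J\<in>Pow PN. \<bar>v J\<bar>)" using JP finPN by (intro member_le_sum) auto
      ultimately show ?thesis using True e unfolding KK_def by (simp add: sum_negf)
    qed
    show ?thesis unfolding st Inv_def fst_conv snd_conv
    proof (intro conjI ballI allI impI)
      fix k assume "k \<notin> PN" thus "(a(i := a i + \<delta>)) k = a0 k" using out i by auto
    next
      show "coal_ok PN (newC C J)" using ok' .
    next
      fix k assume k: "k \<in> PN"
      have bk: "is_mult \<delta> (a k)" "lo k \<le> a k" "a k \<le> \<bar>a0 k\<bar> + KK" using bnd k by blast+
      show "is_mult \<delta> ((a(i := a i + \<delta>)) k)"
        using bk(1) by (cases "k = i") (auto intro: is_mult_add is_mult_self)
      show "lo k \<le> (a(i := a i + \<delta>)) k" using bk(2) delta_pos by (cases "k = i") auto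
      have "a i + \<delta> \<le> \<bar>a0 i\<bar> + KK" using up abs_ge_zero[of "a0 i"] by linarith
      thus "(a(i := a i + \<delta>)) k \<le> \<bar>a0 k\<bar> + KK" using bk(3) by (cases "k = i") simp_all
    next
      fix k assume k: "k \<in> PN" "newC C J k \<noteq> {}"
      show "(\<Sum>j\<in>newC C J k. (a(i := a i + \<delta>)) j) \<le> v (newC C J k)"
      proof (cases "newC C J k = J")
        case True
        show ?thesis unfolding True sum_upd[OF finJ iJ] using \<open>(\<Sum>j\<in>J. a j) + \<delta> \<le> v J\<close> by simp
      next
        case False
        have e: "newC C J k = C k" and nm: "\<forall>m\<in>C k. m \<notin> J" using newC_ok(2)[OF ok JP Jne False k(2)] by auto
        have "i \<notin> C k" using nm iJ by blast
        thus ?thesis unfolding e sum_upd_out[OF \<open>i \<notin> C k\<close>] using sm k e by auto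
      qed
    qed
  next
    case False
    have st: "cp_step v \<delta> (a, C) (i, S) = (let a' = (if C i = {} then a(i := max (v {i}) (a i - \<delta>)) else a) in
     (a', if a' i = v {i} \<and> C i = {} then C(i := {i}) else C))"
      by (rule step_fail) (use False in \<open>simp add: J_def\<close>)
    show ?thesis
    proof (cases "C i = {}")
      case False thus ?thesis unfolding st using inv by simp
    next
      case Ci: True
      define m where "m = max (v {i}) (a i - \<delta>)"
      have st2: "cp_step v \<delta> (a, C) (i, S) = (a(i := m), if m = v {i} then C(i := {i}) else C)"
        unfolding st m_def using Ci by (simp add: Let_def)
      have notin: "\<And>k. k \<in> PN \<Longrightarrow> C k \<noteq> {} \<Longrightarrow> i \<notin> C k"
        using ok Ci unfolding coal_ok_def by blast
      have iP: "{i} \<subseteq> PN" using i by simp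
      have "is_mult \<delta> (v {i})" using v_mult iP by blast
      moreover have "is_mult \<delta> (a i)" using bnd i by blast
      ultimately have mm: "is_mult \<delta> m" unfolding m_def
        by (intro is_mult_max is_mult_diff is_mult_self)
      have mlo: "lo i \<le> m" unfolding m_def lo_def by simp
      have "a i \<le> \<bar>a0 i\<bar> + KK" using bnd i by blast
      moreover have "\<bar>a0 i\<bar> \<ge> 0" by simp
      moreover have "v {i} \<le> \<bar>a0 i\<bar> + KK" using v_le_KK[OF iP] abs_ge_zero[of "a0 i"] by linarith
      ultimately have mhi: "m \<le> \<bar>a0 i\<bar> + KK"
        using delta_pos unfolding m_def by (simp add: max_def)
      have okC': "coal_ok PN (if m = v {i} then C(i := {i}) else C)"
        using coal_ok_single[OF ok i Ci] ok by simp
      show ?thesis unfolding st2 Inv_def fst_conv snd_conv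
      proof (intro conjI ballI allI impI)
        fix k assume "k \<notin> PN" thus "(a(i := m)) k = a0 k" using out i by auto
      next
        show "coal_ok PN (if m = v {i} then C(i := {i}) else C)" using okC' .
      next
        fix k assume k: "k \<in> PN"
        have bk: "is_mult \<delta> (a k)" "lo k \<le> a k" "a k \<le> \<bar>a0 k\<bar> + KK" using bnd k by blast+
        show "is_mult \<delta> ((a(i := m)) k)" using bk mm by simp
        show "lo k \<le> (a(i := m)) k" using bk mlo by simp
        show "(a(i := m)) k \<le> \<bar>a0 k\<bar> + KK" using bk mhi by simp
      next
        fix k assume k: "k \<in> PN" "(if m = v {i} then C(i := {i}) else C) k \<noteq> {}"
        show "(\<Sum>j\<in>(if m = v {i} then C(i := {i}) else C) k. (a(i := m)) j) \<le> v ((if m = v {i} then C(i := {i}) else C) k)"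
        proof (cases "m = v {i} \<and> k = i")
          case True thus ?thesis by simp
        next
          case False
          hence e: "(if m = v {i} then C(i := {i}) else C) k = C k" by auto
          have Ck: "C k \<noteq> {}" using k(2) e by simp
          show ?thesis unfolding e sum_upd_out[OF notin[OF k(1) Ck]] using sm k(1) Ck by auto
        qed
      qed
    qed
  qed
qed


lemma part_unique: "partition_on A \<rho> \<Longrightarrow> B1 \<in> \<rho> \<Longrightarrow> B2 \<in> \<rho> \<Longrightarrow> y \<in> B1 \<Longrightarrow> y \<in> B2 \<Longrightarrow> B1 = B2"
  unfolding partition_on_def disjoint_def by blast
lemma part_ex: "partition_on A \<rho> \<Longrightarrow> y \<in> A \<Longrightarrow> \<exists>B\<in>\<rho>. y \<in> B"
  unfolding partition_on_def by blast
lemma part_sub: "partition_on A \<rho> \<Longrightarrow> B \<in> \<rho> \<Longrightarrow> B \<subseteq> A"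
  unfolding partition_on_def by blast
lemma part_ne: "partition_on A \<rho> \<Longrightarrow> {} \<notin> \<rho>"
  unfolding partition_on_def by blast

lemma inv_step': "Inv s \<Longrightarrow> c \<in> set_pmf p \<Longrightarrow> Inv (cp_step v \<delta> s c)"
  using inv_step[of "fst s" "snd s" "fst c" "snd c"] supp_iff[of "fst c" "snd c"] by simp

definition runw :: "(nat \<times> nat set) list \<Rightarrow> cp_state \<Rightarrow> cp_state" where
  "runw w s = fold (\<lambda>c s. cp_step v \<delta> s c) w s"

lemma runw_Cons: "runw (c # w) s = runw w (cp_step v \<delta> s c)"
  unfolding runw_def by simp

lemma inv_runw: "set w \<subseteq> set_pmf p \<Longrightarrow> Inv s \<Longrightarrow> Inv (runw w s)"
proof (induction w arbitrary: s)
  case Nil thus ?case by (simp add: runw_def)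
next
  case (Cons c w) thus ?case using inv_step'[of s c] by (simp add: runw_Cons)
qed

definition Abs :: "cp_state \<Rightarrow> bool" where
  "Abs s \<longleftrightarrow> Inv s \<and> (\<forall>i\<in>PN. snd s i \<noteq> {}) \<and> (\<forall>T. T \<subseteq> PN \<longrightarrow> v T \<le> (\<Sum>j\<in>T. fst s j))"

lemma abs_fix:
  assumes ab: "Abs s" and c: "c \<in> set_pmf p"
  shows "cp_step v \<delta> s c = s"
proof -
  obtain a C where s: "s = (a, C)" by (cases s)
  obtain i S where c': "c = (i, S)" by (cases c)
  have iS: "i \<in> PN" "S \<subseteq> PN - {i}" using c c' supp_iff by auto
  have "insert i S \<subseteq> PN" using iS by auto
  hence "v (insert i S) \<le> (\<Sum>j\<in>insert i S. a j)" using ab s unfolding Abs_def by simp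
  hence nf: "\<not> (\<Sum>j\<in>insert i S. a j) + \<delta> \<le> v (insert i S)" using delta_pos by linarith
  have "C i \<noteq> {}" using ab s iS(1) unfolding Abs_def by simp
  thus ?thesis unfolding s c' step_fail[where a=a and i=i and S=S and C=C and v=v and \<delta>=\<delta>, OF nf] by (simp add: Let_def)
qed

lemma abs_runw: "set w \<subseteq> set_pmf p \<Longrightarrow> Abs s \<Longrightarrow> runw w s = s"
proof (induction w arbitrary: s)
  case Nil thus ?case by (simp add: runw_def)
next
  case (Cons c w) thus ?case using abs_fix[of s c] by (simp add: runw_Cons)
qed

definition good :: "cp_state \<Rightarrow> bool" where
  "good s \<longleftrightarrow> (\<exists>w. set w \<subseteq> set_pmf p \<and> Abs (runw w s))"

lemma good_abs: "Abs s \<Longrightarrow> good s"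
  unfolding good_def by (rule exI[of _ "[]"]) (simp add: runw_def)

lemma good_step: "c \<in> set_pmf p \<Longrightarrow> good (cp_step v \<delta> s c) \<Longrightarrow> good s"
  unfolding good_def
proof -
  assume c: "c \<in> set_pmf p" and "\<exists>w. set w \<subseteq> set_pmf p \<and> Abs (runw w (cp_step v \<delta> s c))"
  then obtain w where "set w \<subseteq> set_pmf p" "Abs (runw w (cp_step v \<delta> s c))" by blast
  thus "\<exists>w. set w \<subseteq> set_pmf p \<and> Abs (runw w s)" using c
    by (intro exI[of _ "c # w"]) (simp add: runw_Cons)
qed

lemma abs_core:
  assumes ab: "Abs s"
  shows "\<exists>x \<rho>. core_solution n v x \<rho> \<and> env_state_eq n s x \<rho>"
proof -
  obtain a C where s: "s = (a, C)" by (cases s)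
  have inv: "Inv (a, C)" and att: "\<forall>i\<in>PN. C i \<noteq> {}" and cr: "\<forall>T. T \<subseteq> PN \<longrightarrow> v T \<le> (\<Sum>j\<in>T. a j)"
    using ab s unfolding Abs_def by simp_all
  have ok: "coal_ok PN C" and sm: "\<forall>i\<in>PN. C i \<noteq> {} \<longrightarrow> (\<Sum>j\<in>C i. a j) \<le> v (C i)"
    using inv unfolding Inv_def by simp_all
  have okA: "\<And>i. i \<in> PN \<Longrightarrow> i \<in> C i \<and> C i \<subseteq> PN \<and> (\<forall>k\<in>C i. C k = C i)"
    using ok att unfolding coal_ok_def by blast
  define \<rho> where "\<rho> = {C i | i. i \<in> PN \<and> C i \<noteq> {}}"
  have part: "partition_on PN \<rho>"
    unfolding partition_on_def disjoint_def
  proof (intro conjI ballI impI)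
    show "\<Union>\<rho> = PN"
    proof
      show "\<Union>\<rho> \<subseteq> PN" unfolding \<rho>_def using okA by blast
      show "PN \<subseteq> \<Union>\<rho>" unfolding \<rho>_def using okA att by blast
    qed
    show "{} \<notin> \<rho>" unfolding \<rho>_def by blast
  next
    fix A B assume A: "A \<in> \<rho>" and B: "B \<in> \<rho>" and ne: "A \<noteq> B"
    obtain i where i: "i \<in> PN" "A = C i" using A unfolding \<rho>_def by blast
    obtain j where j: "j \<in> PN" "B = C j" using B unfolding \<rho>_def by blast
    show "A \<inter> B = {}"
    proof (rule ccontr)
      assume "A \<inter> B \<noteq> {}"
      then obtain k where "k \<in> C i" "k \<in> C j" using i j by blast
      hence "C k = C i" "C k = C j" using okA i(1) j(1) by blast+
      thus False using ne i j by simp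
    qed
  qed
  have core: "core_solution n v a \<rho>"
    unfolding core_solution_def
  proof (intro conjI allI impI ballI)
    show "partition_on PN \<rho>" using part .
    fix S assume "S \<subseteq> PN" thus "v S \<le> (\<Sum>j\<in>S. a j)" using cr by blast
  next
    fix B assume "B \<in> \<rho>"
    then obtain i where i: "i \<in> PN" "B = C i" "C i \<noteq> {}" unfolding \<rho>_def by blast
    have "C i \<subseteq> PN" using okA i(1) by blast
    hence "v (C i) \<le> (\<Sum>j\<in>C i. a j)" using cr by blast
    moreover have "(\<Sum>j\<in>C i. a j) \<le> v (C i)" using sm i(1,3) by blast
    ultimately show "(\<Sum>j\<in>B. a j) = v B" using i(2) by simp
  qed
  have "env_state_eq n s a \<rho>" unfolding env_state_eq_def s \<rho>_def by simp
  thus ?thesis using core by blast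
qed


lemma mu_less: "(i2::nat) < i1 \<Longrightarrow> u2 \<le> N \<Longrightarrow> i2 * (N + 1) + u2 < i1 * (N + 1) + u1"
proof -
  assume a: "i2 < i1" "u2 \<le> N"
  have "(i2 + 1) * (N + 1) \<le> i1 * (N + 1)" using a(1) by (intro mult_le_mono1) simp
  thus ?thesis using a(2) by (simp add: algebra_simps)
qed

lemma inv_parts:
  assumes "Inv (a, C)"
  shows "coal_ok PN C" "\<And>i. i \<in> PN \<Longrightarrow> is_mult \<delta> (a i)"
    "\<And>i. i \<in> PN \<Longrightarrow> C i \<noteq> {} \<Longrightarrow> i \<in> C i"
    "\<And>i. i \<in> PN \<Longrightarrow> C i \<noteq> {} \<Longrightarrow> C i \<subseteq> PN"
    "\<And>i k. i \<in> PN \<Longrightarrow> k \<in> C i \<Longrightarrow> C k = C i"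
    "\<And>i. i \<in> PN \<Longrightarrow> C i \<noteq> {} \<Longrightarrow> (\<Sum>j\<in>C i. a j) \<le> v (C i)"
proof -
  have I: "coal_ok PN C" "\<forall>i\<in>PN. is_mult \<delta> (a i) \<and> lo i \<le> a i \<and> a i \<le> \<bar>a0 i\<bar> + KK"
    "\<forall>i\<in>PN. C i \<noteq> {} \<longrightarrow> (\<Sum>j\<in>C i. a j) \<le> v (C i)"
    using conjunct1[OF conjunct2[OF assms[unfolded Inv_def fst_conv snd_conv]]]
      conjunct1[OF conjunct2[OF conjunct2[OF assms[unfolded Inv_def fst_conv snd_conv]]]]
      conjunct2[OF conjunct2[OF conjunct2[OF assms[unfolded Inv_def fst_conv snd_conv]]]]
    by - assumption+
  show "coal_ok PN C" using I(1) .
  show "\<And>i. i \<in> PN \<Longrightarrow> is_mult \<delta> (a i)" using I(2) by blast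
  show "\<And>i. i \<in> PN \<Longrightarrow> C i \<noteq> {} \<Longrightarrow> i \<in> C i" using I(1) unfolding coal_ok_def by blast
  show "\<And>i. i \<in> PN \<Longrightarrow> C i \<noteq> {} \<Longrightarrow> C i \<subseteq> PN" using I(1) unfolding coal_ok_def by blast
  show "\<And>i k. i \<in> PN \<Longrightarrow> k \<in> C i \<Longrightarrow> C k = C i"
  proof -
    fix i k assume "i \<in> PN" "k \<in> C i"
    hence "C i \<noteq> {}" by blast
    thus "C k = C i" using I(1) \<open>i \<in> PN\<close> \<open>k \<in> C i\<close> unfolding coal_ok_def by blast
  qed
  show "\<And>i. i \<in> PN \<Longrightarrow> C i \<noteq> {} \<Longrightarrow> (\<Sum>j\<in>C i. a j) \<le> v (C i)" using I(3) by blast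
qed

lemma lemD:
  assumes xc: "core_solution n v a \<rho>"
  shows "Inv (a, C) \<Longrightarrow> good (a, C)"
proof (induction "card {j\<in>PN. C j \<notin> \<rho>} * (card PN + 1) + card {j\<in>PN. C j = {}}" arbitrary: C rule: less_induct)
  case (less C)
  have part: "partition_on PN \<rho>" and cr: "\<And>S. S \<subseteq> PN \<Longrightarrow> v S \<le> (\<Sum>j\<in>S. a j)"
    and tight: "\<And>B. B \<in> \<rho> \<Longrightarrow> (\<Sum>j\<in>B. a j) = v B"
    using xc unfolding core_solution_def by blast+
  note ip = inv_parts[OF less.prems]
  have finI: "finite {j\<in>PN. C' j \<notin> \<rho>}" "finite {j\<in>PN. C' j = {}}" for C' using finPN by simp_all
  have emp: "{} \<notin> \<rho>" using part_ne[OF part] .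
  show ?case
  proof (cases "\<forall>i\<in>PN. C i \<noteq> {}")
    case True
    have "Abs (a, C)" unfolding Abs_def using less.prems True cr by simp
    thus ?thesis by (rule good_abs)
  next
    case False
    then obtain k where k: "k \<in> PN" "C k = {}" by blast
    have kP: "{k} \<subseteq> PN" using k by simp
    have akv: "v {k} \<le> a k" using cr[OF kP] by simp
    have nf: "\<not> (\<Sum>j\<in>insert k {}. a j) + \<delta> \<le> v (insert k {})" using akv delta_pos by simp
    have supp1: "(k, {}) \<in> set_pmf p" using supp_iff k by simp
    have kI: "k \<in> {j\<in>PN. C j \<notin> \<rho>}" using k emp by simp
    show ?thesis
    proof (cases "a k = v {k}")
      case True
      have aa: "a(k := max (v {k}) (a k - \<delta>)) = a" using True delta_pos by (intro ext) (simp add: max_def)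
      have st: "cp_step v \<delta> (a, C) (k, {}) = (a, C(k := {k}))"
        unfolding step_fail[where a=a and i=k and S="{}" and C=C and v=v and \<delta>=\<delta>, OF nf]
        using k(2) True aa by (simp add: Let_def)
      have inv': "Inv (a, C(k := {k}))" using inv_step[OF less.prems k(1), of "{}"] st by simp
      have sub1: "{j\<in>PN. (C(k := {k})) j \<notin> \<rho>} \<subseteq> {j\<in>PN. C j \<notin> \<rho>}" using kI by auto
      have sub2: "{j\<in>PN. (C(k := {k})) j = {}} \<subset> {j\<in>PN. C j = {}}" using k by auto
      have "card {j\<in>PN. (C(k := {k})) j \<notin> \<rho>} \<le> card {j\<in>PN. C j \<notin> \<rho>}"
        by (rule card_mono[OF finI(1) sub1])
      moreover have "card {j\<in>PN. (C(k := {k})) j = {}} < card {j\<in>PN. C j = {}}"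
        by (rule psubset_card_mono[OF finI(2) sub2])
      ultimately have "card {j\<in>PN. (C(k := {k})) j \<notin> \<rho>} * (card PN + 1) + card {j\<in>PN. (C(k := {k})) j = {}}
          < card {j\<in>PN. C j \<notin> \<rho>} * (card PN + 1) + card {j\<in>PN. C j = {}}"
        by (intro add_le_less_mono mult_le_mono1)
      hence "good (a, C(k := {k}))" using less.hyps[OF _ inv'] by simp
      thus ?thesis using good_step[OF supp1] st by simp
    next
      case False
      have "is_mult \<delta> (v {k})" using v_mult kP by blast
      hence ak: "v {k} + \<delta> \<le> a k" using is_mult_lt[OF delta_pos _ ip(2)[OF k(1)]] akv False by simp
      define a1 where "a1 = a(k := a k - \<delta>)"
      define C1 where "C1 = (if a k - \<delta> = v {k} then C(k := {k}) else C)"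
      have mx: "max (v {k}) (a k - \<delta>) = a k - \<delta>" using ak by simp
      have st1: "cp_step v \<delta> (a, C) (k, {}) = (a1, C1)"
        unfolding step_fail[where a=a and i=k and S="{}" and C=C and v=v and \<delta>=\<delta>, OF nf]
        using k(2) mx unfolding a1_def C1_def by (simp add: Let_def)
      have inv1: "Inv (a1, C1)" using inv_step[OF less.prems k(1), of "{}"] st1 by simp
      note ip1 = inv_parts[OF inv1]
      obtain B where B: "B \<in> \<rho>" "k \<in> B" using part_ex[OF part k(1)] by blast
      have BP: "B \<subseteq> PN" using part_sub[OF part B(1)] .
      have finB: "finite B" using BP finPN finite_subset by blast
      have ins: "insert k (B - {k}) = B" using B(2) by blast
      have sumB: "(\<Sum>j\<in>B. a1 j) = (\<Sum>j\<in>B. a j) - \<delta>" unfolding a1_def using sum_upd[OF finB B(2)] by simp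
      have succ: "(\<Sum>j\<in>insert k (B - {k}). a1 j) + \<delta> \<le> v (insert k (B - {k}))"
        unfolding ins sumB tight[OF B(1)] by simp
      have aa: "a1(k := a1 k + \<delta>) = a" unfolding a1_def by (intro ext) simp
      have st2: "cp_step v \<delta> (a1, C1) (k, B - {k}) = (a, newC C1 B)"
        using step_succ[where a=a1 and i=k and S="B - {k}" and C=C1 and v=v and \<delta>=\<delta>, OF succ]
        unfolding ins aa .
      have supp2: "(k, B - {k}) \<in> set_pmf p" using supp_iff k BP by auto
      have inv2: "Inv (a, newC C1 B)" using inv_step[OF inv1 k(1), of "B - {k}"] st2 BP by auto
      have C1k: "C1 k \<subseteq> {k}" unfolding C1_def using k(2) by simp
      have C1o: "\<And>j. j \<noteq> k \<Longrightarrow> C1 j = C j" unfolding C1_def by simp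
      have sub: "{j\<in>PN. newC C1 B j \<notin> \<rho>} \<subseteq> {j\<in>PN. C j \<notin> \<rho>} - {k}"
      proof
        fix j assume j: "j \<in> {j\<in>PN. newC C1 B j \<notin> \<rho>}"
        hence jP: "j \<in> PN" and nr: "newC C1 B j \<notin> \<rho>" by simp_all
        have jB: "j \<notin> B" using nr B(1) unfolding newC_def by auto
        have jk: "j \<noteq> k" using jB B(2) by blast
        have "C j \<notin> \<rho>"
        proof
          assume Cj: "C j \<in> \<rho>"
          have nfr: "\<not>(\<exists>j'\<in>B. j \<in> C1 j' \<and> j \<noteq> j')"
          proof
            assume "\<exists>j'\<in>B. j \<in> C1 j' \<and> j \<noteq> j'"
            then obtain j' where j': "j' \<in> B" "j \<in> C1 j'" "j \<noteq> j'" by blast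
            have j'k: "j' \<noteq> k" using j' C1k by blast
            hence jC: "j \<in> C j'" using j' C1o by simp
            have j'P: "j' \<in> PN" using j'(1) BP by blast
            have "C j = C j'" using ip(5)[OF j'P jC] .
            moreover have "j' \<in> C j'" using ip(3)[OF j'P] jC by blast
            ultimately have "j' \<in> C j" by simp
            hence "C j = B" by (rule part_unique[OF part Cj B(1) _ j'(1)])
            moreover have "C j \<noteq> {}" using Cj emp by (cases "C j = {}") simp_all
            hence "j \<in> C j" by (rule ip(3)[OF jP])
            ultimately show False using jB by simp
          qed
          have "newC C1 B j = C j" unfolding newC_def if_not_P[OF jB] if_not_P[OF nfr] C1o[OF jk] ..
          thus False using nr Cj by simp
        qed
        thus "j \<in> {j\<in>PN. C j \<notin> \<rho>} - {k}" using jP jk by simp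
      qed
      have "card {j\<in>PN. newC C1 B j \<notin> \<rho>} < card {j\<in>PN. C j \<notin> \<rho>}"
      proof -
        have "{j\<in>PN. newC C1 B j \<notin> \<rho>} \<subset> {j\<in>PN. C j \<notin> \<rho>}" using sub kI by blast
        thus ?thesis by (rule psubset_card_mono[OF finI(1)])
      qed
      moreover have "card {j\<in>PN. newC C1 B j = {}} \<le> card PN" using finPN by (intro card_mono) auto
      ultimately have "card {j\<in>PN. newC C1 B j \<notin> \<rho>} * (card PN + 1) + card {j\<in>PN. newC C1 B j = {}}
          < card {j\<in>PN. C j \<notin> \<rho>} * (card PN + 1) + card {j\<in>PN. C j = {}}"
        by (rule mu_less)
      hence "good (a, newC C1 B)" using less.hyps[OF _ inv2] by simp
      hence "good (a1, C1)" using good_step[OF supp2] st2 by simp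
      thus ?thesis using good_step[OF supp1] st1 by simp
    qed
  qed
qed


definition Phi :: "(nat \<Rightarrow> real) \<Rightarrow> (nat \<Rightarrow> real) \<Rightarrow> real" where
  "Phi x a = (\<Sum>i\<in>PN. \<bar>a i - x i\<bar>)"

lemma Phi_nonneg: "Phi x a \<ge> 0" unfolding Phi_def by (simp add: sum_nonneg)

lemma Phi_upd: "k \<in> PN \<Longrightarrow> Phi x (a(k := y)) = Phi x a + (\<bar>y - x k\<bar> - \<bar>a k - x k\<bar>)"
proof -
  assume k: "k \<in> PN"
  have "Phi x (a(k := y)) = (\<Sum>i\<in>PN. ((\<lambda>i. \<bar>a i - x i\<bar>)(k := \<bar>y - x k\<bar>)) i)"
    unfolding Phi_def by (rule sum.cong) auto
  also have "\<dots> = (\<Sum>i\<in>PN. \<bar>a i - x i\<bar>) + (\<bar>y - x k\<bar> - \<bar>a k - x k\<bar>)"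
    by (rule sum_upd[OF finPN k])
  finally show ?thesis unfolding Phi_def .
qed

lemma lemM:
  assumes xc: "core_solution n v x \<rho>" and xm: "\<forall>i\<in>PN. is_mult \<delta> (x i)"
  shows "Inv (a, C) \<Longrightarrow> Phi x a \<le> real m * \<delta> \<Longrightarrow> good (a, C)"
proof (induction m arbitrary: a C rule: less_induct)
  case (less m a C)
  have partx: "partition_on PN \<rho>" and cr_x: "\<And>S. S \<subseteq> PN \<Longrightarrow> v S \<le> (\<Sum>j\<in>S. x j)"
    and tightx: "\<And>B. B \<in> \<rho> \<Longrightarrow> (\<Sum>j\<in>B. x j) = v B"
    using xc unfolding core_solution_def by blast+
  note ip = inv_parts[OF less.prems(1)]
  have step_ok: "good (a', C')" if i: "Inv (a', C')" and e: "Phi x a' = Phi x a - \<delta>" for a' C'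
  proof -
    have "m \<noteq> 0"
    proof
      assume "m = 0"
      hence "Phi x a \<le> 0" using less.prems(2) by simp
      thus False using e Phi_nonneg[of x a'] delta_pos by linarith
    qed
    then obtain m' where m': "m = Suc m'" by (cases m) auto
    have "Phi x a' \<le> real m' * \<delta>" using e less.prems(2) m' by (simp add: algebra_simps)
    thus ?thesis using less.IH[of m' a' C'] m' i by simp
  qed
  show ?case
  proof (cases "\<exists>k\<in>PN. C k = {} \<and> a k > x k")
    case True
    then obtain k where k: "k \<in> PN" "C k = {}" "a k > x k" by blast
    have kP: "{k} \<subseteq> PN" using k by simp
    have xk: "v {k} \<le> x k" using cr_x[OF kP] by simp
    have ak: "x k + \<delta> \<le> a k" using is_mult_lt[OF delta_pos _ ip(2)[OF k(1)] k(3)] xm k(1) by blast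
    have nf: "\<not> (\<Sum>j\<in>insert k {}. a j) + \<delta> \<le> v (insert k {})" using xk k(3) delta_pos by simp
    have mx: "max (v {k}) (a k - \<delta>) = a k - \<delta>" using ak xk by simp
    obtain C' where st: "cp_step v \<delta> (a, C) (k, {}) = (a(k := a k - \<delta>), C')"
      unfolding step_fail[where a=a and i=k and S="{}" and C=C and v=v and \<delta>=\<delta>, OF nf]
      using k(2) mx by (simp add: Let_def)
    have supp1: "(k, {}) \<in> set_pmf p" using supp_iff k by simp
    have inv': "Inv (a(k := a k - \<delta>), C')" using inv_step[OF less.prems(1) k(1), of "{}"] st by simp
    have e1: "\<bar>a k - \<delta> - x k\<bar> = a k - x k - \<delta>" using ak by simp
    have e2: "\<bar>a k - x k\<bar> = a k - x k" using ak delta_pos by simp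
    have "Phi x (a(k := a k - \<delta>)) = Phi x a - \<delta>" unfolding Phi_upd[OF k(1)] e1 e2 by simp
    hence "good (a(k := a k - \<delta>), C')" by (rule step_ok[OF inv'])
    thus ?thesis using good_step[OF supp1] st by simp
  next
    case nA: False
    show ?thesis
    proof (cases "\<exists>T i. T \<subseteq> PN \<and> i \<in> T \<and> a i < x i \<and> (\<Sum>j\<in>T. a j) < v T")
      case True
      then obtain T i where T: "T \<subseteq> PN" "i \<in> T" "a i < x i" "(\<Sum>j\<in>T. a j) < v T" by blast
      have iP: "i \<in> PN" using T by blast
      have finT: "finite T" using T(1) finPN finite_subset by blast
      have ins: "insert i (T - {i}) = T" using T(2) by blast
      have m1: "is_mult \<delta> (\<Sum>j\<in>T. a j)" using is_mult_sum[OF finT] ip(2) T(1) by blast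
      have m2: "is_mult \<delta> (v T)" using v_mult T(1) by blast
      have succ: "(\<Sum>j\<in>insert i (T - {i}). a j) + \<delta> \<le> v (insert i (T - {i}))"
        unfolding ins by (rule is_mult_lt[OF delta_pos m1 m2 T(4)])
      have st: "cp_step v \<delta> (a, C) (i, T - {i}) = (a(i := a i + \<delta>), newC C T)"
        using step_succ[where a=a and i=i and S="T - {i}" and C=C and v=v and \<delta>=\<delta>, OF succ]
        unfolding ins .
      have ai: "a i + \<delta> \<le> x i" using is_mult_lt[OF delta_pos ip(2)[OF iP] _ T(3)] xm iP by blast
      have supp1: "(i, T - {i}) \<in> set_pmf p" using supp_iff iP T(1) by auto
      have inv': "Inv (a(i := a i + \<delta>), newC C T)" using inv_step[OF less.prems(1) iP, of "T - {i}"] st T(1) by auto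
      have e1: "\<bar>a i + \<delta> - x i\<bar> = x i - a i - \<delta>" using ai by simp
      have e2: "\<bar>a i - x i\<bar> = x i - a i" using T(3) by simp
      have "Phi x (a(i := a i + \<delta>)) = Phi x a - \<delta>" unfolding Phi_upd[OF iP] e1 e2 by simp
      hence "good (a(i := a i + \<delta>), newC C T)" by (rule step_ok[OF inv'])
      thus ?thesis using good_step[OF supp1] st by simp
    next
      case nC: False
      have crA: "v T \<le> (\<Sum>j\<in>T. a j)" if TP: "T \<subseteq> PN" for T
      proof (rule ccontr)
        assume lt: "\<not> v T \<le> (\<Sum>j\<in>T. a j)"
        have "\<exists>i\<in>T. a i < x i"
        proof (rule ccontr)
          assume "\<not> (\<exists>i\<in>T. a i < x i)"
          hence "(\<Sum>j\<in>T. x j) \<le> (\<Sum>j\<in>T. a j)" by (intro sum_mono) (simp add: not_less)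
          thus False using cr_x[OF TP] lt by linarith
        qed
        then obtain i where i: "i \<in> T" "a i < x i" by blast
        have "(\<Sum>j\<in>T. a j) < v T" using lt by simp
        thus False using nC TP i by blast
      qed
      define At where "At = {i\<in>PN. C i \<noteq> {}}"
      define Co where "Co = C ` At"
      have AtP: "At \<subseteq> PN" unfolding At_def by blast
      have UCo: "\<Union>Co = At"
      proof
        show "\<Union>Co \<subseteq> At"
        proof
          fix j assume "j \<in> \<Union>Co"
          then obtain i where i: "i \<in> At" "j \<in> C i" unfolding Co_def by blast
          have iP: "i \<in> PN" and Ci: "C i \<noteq> {}" using i(1) unfolding At_def by blast+
          have "C j = C i" by (rule ip(5)[OF iP i(2)])
          moreover have "j \<in> PN" using ip(4)[OF iP Ci] i(2) by blast
          ultimately show "j \<in> At" unfolding At_def using Ci by simp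
        qed
        show "At \<subseteq> \<Union>Co"
        proof
          fix i assume i: "i \<in> At"
          hence "i \<in> C i" using ip(3) unfolding At_def by blast
          thus "i \<in> \<Union>Co" unfolding Co_def using i by blast
        qed
      qed
      have finCo: "\<forall>A\<in>Co. finite A"
      proof
        fix A assume "A \<in> Co"
        then obtain i where i: "i \<in> At" "A = C i" unfolding Co_def by blast
        have "C i \<subseteq> PN" using ip(4) i(1) unfolding At_def by blast
        thus "finite A" using i(2) finPN finite_subset by blast
      qed
      have disjCo: "\<forall>A\<in>Co. \<forall>B\<in>Co. A \<noteq> B \<longrightarrow> A \<inter> B = {}"
      proof (intro ballI impI)
        fix A B assume A: "A \<in> Co" and B: "B \<in> Co" and ne: "A \<noteq> B"
        obtain i where i: "i \<in> At" "A = C i" using A unfolding Co_def by blast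
        obtain j where j: "j \<in> At" "B = C j" using B unfolding Co_def by blast
        have iP: "i \<in> PN" "j \<in> PN" using i j AtP by blast+
        show "A \<inter> B = {}"
        proof (rule ccontr)
          assume "A \<inter> B \<noteq> {}"
          then obtain k where "k \<in> C i" "k \<in> C j" using i j by blast
          hence "C k = C i" "C k = C j" using ip(5) iP by blast+
          thus False using ne i j by simp
        qed
      qed
      have sA: "(\<Sum>j\<in>At. a j) = (\<Sum>J\<in>Co. \<Sum>j\<in>J. a j)"
        using sum.Union_disjoint[OF finCo disjCo, of a] UCo by (simp add: o_def)
      have sX: "(\<Sum>j\<in>At. x j) = (\<Sum>J\<in>Co. \<Sum>j\<in>J. x j)"
        using sum.Union_disjoint[OF finCo disjCo, of x] UCo by (simp add: o_def)
      have "(\<Sum>J\<in>Co. \<Sum>j\<in>J. a j) \<le> (\<Sum>J\<in>Co. \<Sum>j\<in>J. x j)"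
      proof (rule sum_mono)
        fix J assume "J \<in> Co"
        then obtain i where i: "i \<in> At" "J = C i" unfolding Co_def by blast
        have iP: "i \<in> PN" and Ci: "C i \<noteq> {}" using i(1) unfolding At_def by blast+
        have "(\<Sum>j\<in>C i. a j) \<le> v (C i)" by (rule ip(6)[OF iP Ci])
        also have "\<dots> \<le> (\<Sum>j\<in>C i. x j)" by (rule cr_x[OF ip(4)[OF iP Ci]])
        finally show "(\<Sum>j\<in>J. a j) \<le> (\<Sum>j\<in>J. x j)" using i(2) by simp
      qed
      hence le1: "(\<Sum>j\<in>At. a j) \<le> (\<Sum>j\<in>At. x j)" using sA sX by simp
      have le2: "(\<Sum>j\<in>PN - At. a j) \<le> (\<Sum>j\<in>PN - At. x j)"
      proof (rule sum_mono)
        fix j assume "j \<in> PN - At"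
        hence "j \<in> PN" "C j = {}" unfolding At_def by blast+
        thus "a j \<le> x j" using nA by (meson not_less)
      qed
      have "(\<Sum>j\<in>PN. a j) = (\<Sum>j\<in>PN - At. a j) + (\<Sum>j\<in>At. a j)" by (rule sum.subset_diff[OF AtP finPN])
      moreover have "(\<Sum>j\<in>PN. x j) = (\<Sum>j\<in>PN - At. x j) + (\<Sum>j\<in>At. x j)" by (rule sum.subset_diff[OF AtP finPN])
      ultimately have leP: "(\<Sum>j\<in>PN. a j) \<le> (\<Sum>j\<in>PN. x j)" using le1 le2 by linarith
      have Urho: "\<Union>\<rho> = PN" and disjr: "\<forall>A\<in>\<rho>. \<forall>B\<in>\<rho>. A \<noteq> B \<longrightarrow> A \<inter> B = {}"
        using partx unfolding partition_on_def disjoint_def by blast+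
      have finr: "\<forall>A\<in>\<rho>. finite A" using part_sub[OF partx] finPN finite_subset by blast
      have finrho: "finite \<rho>"
      proof (rule finite_subset)
        show "\<rho> \<subseteq> Pow PN" using part_sub[OF partx] by blast
        show "finite (Pow PN)" using finPN by simp
      qed
      have rA: "(\<Sum>j\<in>PN. a j) = (\<Sum>B\<in>\<rho>. \<Sum>j\<in>B. a j)"
        using sum.Union_disjoint[OF finr disjr, of a] Urho by (simp add: o_def)
      have rX: "(\<Sum>j\<in>PN. x j) = (\<Sum>B\<in>\<rho>. v B)"
        using sum.Union_disjoint[OF finr disjr, of x] Urho tightx by (simp add: o_def)
      have nonneg: "0 \<le> (\<Sum>j\<in>B. a j) - v B" if B: "B \<in> \<rho>" for B
      proof -
        have "v B \<le> (\<Sum>j\<in>B. a j)" by (rule crA[OF part_sub[OF partx B]])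
        thus ?thesis by simp
      qed
      have "(\<Sum>B\<in>\<rho>. (\<Sum>j\<in>B. a j) - v B) \<le> 0"
        using leP rA rX by (simp add: sum_subtractf)
      moreover have "(\<Sum>B\<in>\<rho>. (\<Sum>j\<in>B. a j) - v B) \<ge> 0" using nonneg by (simp add: sum_nonneg)
      ultimately have "(\<Sum>B\<in>\<rho>. (\<Sum>j\<in>B. a j) - v B) = 0" by linarith
      hence "\<forall>B\<in>\<rho>. (\<Sum>j\<in>B. a j) - v B = 0" using sum_nonneg_eq_0_iff[OF finrho nonneg] by simp
      hence tA: "\<forall>B\<in>\<rho>. (\<Sum>j\<in>B. a j) = v B" by simp
      have "core_solution n v a \<rho>" unfolding core_solution_def
      proof (intro conjI allI impI)
        show "partition_on PN \<rho>" by (rule partx)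
        show "\<forall>S\<in>\<rho>. (\<Sum>i\<in>S. a i) = v S" by (rule tA)
        fix S assume "S \<subseteq> PN" thus "v S \<le> (\<Sum>i\<in>S. a i)" by (rule crA)
      qed
      thus ?thesis by (rule lemD[OF _ less.prems(1)])
    qed
  qed
qed

lemma all_good: "Inv s \<Longrightarrow> good s"
proof -
  assume inv: "Inv s"
  obtain a C where s: "s = (a, C)" by (cases s)
  obtain x \<rho> where xc: "core_solution n v x \<rho>" and xm: "\<forall>i\<in>PN. is_mult \<delta> (x i)" using core_mult by blast
  define m where "m = nat \<lceil>Phi x a / \<delta>\<rceil>"
  have "Phi x a / \<delta> \<le> real m" unfolding m_def by linarith
  hence "Phi x a \<le> real m * \<delta>" using delta_pos by (simp add: pos_divide_le_eq)
  thus ?thesis using lemM[OF xc xm] inv s by blast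
qed


lemma finite_Inv: "finite {s. Inv s}"
proof -
  define hi where "hi i = \<bar>a0 i\<bar> + KK" for i
  define Vals where "Vals i = {r. is_mult \<delta> r \<and> lo i \<le> r \<and> r \<le> hi i}" for i
  have finV: "finite (Vals i)" for i
  proof (rule finite_subset)
    show "Vals i \<subseteq> (\<lambda>k. of_int k * \<delta>) ` {\<lfloor>lo i / \<delta>\<rfloor> .. \<lceil>hi i / \<delta>\<rceil>}"
    proof
      fix r assume "r \<in> Vals i"
      then obtain k where k: "r = of_int k * \<delta>" and r: "lo i \<le> r" "r \<le> hi i"
        unfolding Vals_def is_mult_def by blast
      have "lo i / \<delta> \<le> of_int k" using r(1) k delta_pos by (simp add: pos_divide_le_eq)
      hence "\<lfloor>lo i / \<delta>\<rfloor> \<le> \<lfloor>(of_int k :: real)\<rfloor>" by (rule floor_mono)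
      hence k1: "\<lfloor>lo i / \<delta>\<rfloor> \<le> k" by simp
      have "of_int k \<le> hi i / \<delta>" using r(2) k delta_pos by (simp add: pos_le_divide_eq)
      hence "\<lceil>(of_int k :: real)\<rceil> \<le> \<lceil>hi i / \<delta>\<rceil>" by (rule ceiling_mono)
      hence k2: "k \<le> \<lceil>hi i / \<delta>\<rceil>" by simp
      show "r \<in> (\<lambda>k. of_int k * \<delta>) ` {\<lfloor>lo i / \<delta>\<rfloor> .. \<lceil>hi i / \<delta>\<rceil>}" using k k1 k2 by auto
    qed
    show "finite ((\<lambda>k. of_int k * \<delta>) ` {\<lfloor>lo i / \<delta>\<rfloor> .. \<lceil>hi i / \<delta>\<rceil>})" by simp
  qed
  define g where "g s = (restrict (fst s) PN, restrict (snd s) PN)" for s :: cp_state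
  show ?thesis
  proof (rule inj_on_finite)
    show "inj_on g {s. Inv s}"
    proof (rule inj_onI)
      fix s1 s2 assume s1: "s1 \<in> {s. Inv s}" and s2: "s2 \<in> {s. Inv s}" and e: "g s1 = g s2"
      have o1: "\<forall>i. i \<notin> PN \<longrightarrow> fst s1 i = a0 i" "coal_ok PN (snd s1)" using s1 unfolding Inv_def by simp_all
      have o2: "\<forall>i. i \<notin> PN \<longrightarrow> fst s2 i = a0 i" "coal_ok PN (snd s2)" using s2 unfolding Inv_def by simp_all
      have r1: "restrict (fst s1) PN = restrict (fst s2) PN" and r2: "restrict (snd s1) PN = restrict (snd s2) PN"
        using e unfolding g_def by simp_all
      have "fst s1 = fst s2"
      proof
        fix i show "fst s1 i = fst s2 i"
        proof (cases "i \<in> PN")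
          case True thus ?thesis using fun_cong[OF r1, of i] by simp
        next
          case False thus ?thesis using o1(1) o2(1) by simp
        qed
      qed
      moreover have "snd s1 = snd s2"
      proof
        fix i show "snd s1 i = snd s2 i"
        proof (cases "i \<in> PN")
          case True thus ?thesis using fun_cong[OF r2, of i] by simp
        next
          case False
          have "snd s1 i = {}" "snd s2 i = {}" using o1(2) o2(2) False unfolding coal_ok_def by blast+
          thus ?thesis by simp
        qed
      qed
      ultimately show "s1 = s2" by (simp add: prod_eq_iff)
    qed
    show "g ` {s. Inv s} \<subseteq> (PiE PN Vals) \<times> (PiE PN (\<lambda>_. Pow PN))"
    proof
      fix y assume "y \<in> g ` {s. Inv s}"
      then obtain s where s: "Inv s" "y = g s" by blast
      have b: "\<forall>i\<in>PN. is_mult \<delta> (fst s i) \<and> lo i \<le> fst s i \<and> fst s i \<le> \<bar>a0 i\<bar> + KK" and ok: "coal_ok PN (snd s)"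
        using s(1) unfolding Inv_def by simp_all
      have "restrict (fst s) PN \<in> PiE PN Vals" using b unfolding Vals_def hi_def by auto
      moreover have "restrict (snd s) PN \<in> PiE PN (\<lambda>_. Pow PN)"
      proof -
        have "\<forall>i\<in>PN. snd s i \<subseteq> PN" using ok unfolding coal_ok_def by blast
        thus ?thesis by auto
      qed
      ultimately show "y \<in> (PiE PN Vals) \<times> (PiE PN (\<lambda>_. Pow PN))" using s(2) unfolding g_def by simp
    qed
    show "finite ((PiE PN Vals) \<times> (PiE PN (\<lambda>_. Pow PN)))"
      using finPN finV by (simp add: finite_PiE)
  qed
qed

lemma runw_append: "runw (xs @ ys) s = runw ys (runw xs s)"
  unfolding runw_def by simp

lemma univ_word: "\<exists>w. set w \<subseteq> set_pmf p \<and> (\<forall>s. Inv s \<longrightarrow> Abs (runw w s))"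
proof -
  have "finite F \<Longrightarrow> F \<subseteq> {s. Inv s} \<Longrightarrow> \<exists>w. set w \<subseteq> set_pmf p \<and> (\<forall>s\<in>F. Abs (runw w s))" for F
  proof (induction F rule: finite_induct)
    case empty show ?case by (rule exI[of _ "[]"]) simp
  next
    case (insert s F)
    then obtain w where w: "set w \<subseteq> set_pmf p" "\<forall>t\<in>F. Abs (runw w t)" by blast
    have "Inv s" using insert.prems by blast
    hence "Inv (runw w s)" using inv_runw w(1) by blast
    hence "good (runw w s)" by (rule all_good)
    then obtain w' where w': "set w' \<subseteq> set_pmf p" "Abs (runw w' (runw w s))" unfolding good_def by blast
    have "\<forall>t\<in>insert s F. Abs (runw (w @ w') t)"
    proof
      fix t assume "t \<in> insert s F"
      thus "Abs (runw (w @ w') t)"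
      proof
        assume "t = s" thus ?thesis using w' by (simp add: runw_append)
      next
        assume "t \<in> F"
        hence "Abs (runw w t)" using w(2) by blast
        thus ?thesis using abs_runw[OF w'(1)] by (simp add: runw_append)
      qed
    qed
    thus ?case using w(1) w'(1) by (intro exI[of _ "w @ w'"]) simp
  qed
  from this[OF finite_Inv] show ?thesis by blast
qed

lemma run_runw: "cp_run v \<delta> a0 \<omega> (t + L) = runw (stake L (sdrop t \<omega>)) (cp_run v \<delta> a0 \<omega> t)"
proof (induction L)
  case 0 thus ?case by (simp add: runw_def)
next
  case (Suc L)
  have "cp_run v \<delta> a0 \<omega> (t + Suc L) = cp_step v \<delta> (cp_run v \<delta> a0 \<omega> (t + L)) (\<omega> !! (t + L))" by simp
  also have "\<dots> = runw (stake (Suc L) (sdrop t \<omega>)) (cp_run v \<delta> a0 \<omega> t)"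
  proof -
    have e: "stake (Suc L) (sdrop t \<omega>) = stake L (sdrop t \<omega>) @ [\<omega> !! (t + L)]"
      by (simp only: stake_Suc sdrop_snth)
    show ?thesis unfolding e runw_append Suc.IH[symmetric] by (simp add: runw_def)
  qed
  finally show ?case .
qed

lemma inv_run: "(\<forall>j. \<omega> !! j \<in> set_pmf p) \<Longrightarrow> Inv (cp_run v \<delta> a0 \<omega> t)"
proof (induction t)
  case 0
  have "Inv (a0, \<lambda>_. {})" unfolding Inv_def coal_ok_def lo_def using a0_mult KK_nonneg by auto
  thus ?case by simp
next
  case (Suc t) thus ?case using inv_step' by simp
qed

lemma abs_stays:
  assumes "\<forall>j. \<omega> !! j \<in> set_pmf p" "Abs (cp_run v \<delta> a0 \<omega> T)"
  shows "cp_run v \<delta> a0 \<omega> (T + d) = cp_run v \<delta> a0 \<omega> T"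
proof (induction d)
  case 0 thus ?case by simp
next
  case (Suc d)
  have "cp_run v \<delta> a0 \<omega> (T + Suc d) = cp_step v \<delta> (cp_run v \<delta> a0 \<omega> (T + d)) (\<omega> !! (T + d))" by simp
  also have "\<dots> = cp_run v \<delta> a0 \<omega> T" using Suc.IH abs_fix[OF assms(2)] assms(1) by simp
  finally show ?case .
qed

theorem main:
  "AE \<omega> in stream_space (measure_pmf p).
     \<exists>x \<rho>. core_solution n v x \<rho> \<and> (\<forall>\<^sub>F t in sequentially. env_state_eq n (cp_run v \<delta> a0 \<omega> t) x \<rho>)"
proof -
  obtain w where w: "set w \<subseteq> set_pmf p" "\<forall>s. Inv s \<longrightarrow> Abs (runw w s)" using univ_word by blast
  have AE1: "AE \<omega> in stream_space (measure_pmf p). stream_all (\<lambda>c. c \<in> set_pmf p) \<omega>"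
    by (rule prob_space.AE_stream_all[OF prob_space_measure_pmf pred_pmf_any AE_measure_pmf])
  have AE2: "AE \<omega> in stream_space (measure_pmf p). \<exists>t. \<forall>i<length w. \<omega> !! (t + i) = w ! i"
    by (rule block_AE[OF w(1)])
  show ?thesis using AE1 AE2
  proof eventually_elim
    case (elim \<omega>)
    have all: "\<forall>j. \<omega> !! j \<in> set_pmf p" using elim(1) unfolding stream_all_def by blast
    obtain t where t: "\<forall>i<length w. \<omega> !! (t + i) = w ! i" using elim(2) by blast
    have sw: "stake (length w) (sdrop t \<omega>) = w"
      by (rule nth_equalityI) (simp_all add: sdrop_snth t)
    define T where "T = t + length w"
    have eT: "cp_run v \<delta> a0 \<omega> T = runw w (cp_run v \<delta> a0 \<omega> t)"
      unfolding T_def run_runw sw ..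
    have abT: "Abs (cp_run v \<delta> a0 \<omega> T)" unfolding eT using w(2) inv_run[OF all] by blast
    obtain x \<rho> where xr: "core_solution n v x \<rho>" "env_state_eq n (cp_run v \<delta> a0 \<omega> T) x \<rho>"
      using abs_core[OF abT] by blast
    have "\<forall>t'\<ge>T. env_state_eq n (cp_run v \<delta> a0 \<omega> t') x \<rho>"
    proof (intro allI impI)
      fix t' assume "T \<le> t'"
      then obtain d where "t' = T + d" using le_Suc_ex by blast
      thus "env_state_eq n (cp_run v \<delta> a0 \<omega> t') x \<rho>" using abs_stays[OF all abT] xr(2) by simp
    qed
    hence "\<forall>\<^sub>F t in sequentially. env_state_eq n (cp_run v \<delta> a0 \<omega> t) x \<rho>"
      unfolding eventually_sequentially by blast
    thus ?case using xr(1) by blast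
  qed
qed

end

theorem theorem1:
  fixes n :: nat and v :: "nat set \<Rightarrow> real" and \<delta> :: real
    and p :: "(nat \<times> nat set) pmf" and a0 :: "nat \<Rightarrow> real"
  assumes v_empty: "v {} = 0"
    and core_nonempty: "\<exists>x \<rho>. core_solution n v x \<rho>"
    and delta_pos: "\<delta> > 0"
    and v_mult: "\<forall>S. S \<subseteq> players n \<longrightarrow> is_mult \<delta> (v S)"
    and core_mult: "\<exists>x \<rho>. core_solution n v x \<rho> \<and> (\<forall>i\<in>players n. is_mult \<delta> (x i))"
    and p_support: "set_pmf p = {(i, S). i \<in> players n \<and> S \<subseteq> players n - {i}}"
    and a0_mult: "\<forall>i\<in>players n. is_mult \<delta> (a0 i)"
  shows "AE \<omega> in stream_space (measure_pmf p).
           \<exists>x \<rho>. core_solution n v x \<rho> \<and>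
             (\<forall>\<^sub>F t in sequentially. env_state_eq n (cp_run v \<delta> a0 \<omega> t) x \<rho>)"
proof -
  interpret cpl n v \<delta> p a0
    by unfold_locales (use assms in auto)
  show ?thesis by (rule main)
qed

end
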